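(* For every integer $n\ge1$, $$f(n)=\begin{cases}\lfloor n\varphi\rfloor, & \text{if there exists } m\in\mathbb{N} \text{ with } n-1=\lfloor m\varphi\rfloor,\\ \lfloor n/\varphi\rfloor+1, & \text{otherwise,}\end{cases}$$ where $\varphi=(1+\sqrt5)/2$.
   Context: $\mathbb{N}=\{0,1,2,\dots\}$. The sequence $f:\mathbb{N}\to\mathbb{N}$ is defined greedily: $f(0)=0$, and for $n\ge1$, $f(n)$ is the least natural number such that (i) $f(n)\notin\{f(0),f(1),\dots,f(n-1)\}$ and (ii) $\sum_{1\le i\le n} f(i)$ is divisible by $n$. *)

theory Defs
  imports Complex_Main
begin

fun greedy_seq :: "nat \<Rightarrow> nat list" where
  "greedy_seq 0 = [0]"
| "greedy_seq (Suc n) =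
     (let prev = greedy_seq n
      in prev @ [LEAST k. k \<notin> set prev \<and> Suc n dvd (sum_list prev + k)])"

definition f :: "nat \<Rightarrow> nat" where
  "f n = greedy_seq n ! n"

definition phi :: real where
  "phi = (1 + sqrt 5) / 2"

lemma greedy_seq_length: "length (greedy_seq n) = Suc n"
  by (induction n) (simp_all add: Let_def)

end

theory Submission
  imports Defs
begin

lemma no_sq5: "(j::nat)^2 = 5*n^2 \<Longrightarrow> n = 0"
proof (induction n arbitrary: j rule: less_induct)
  case (less n)
  show ?case
  proof (rule ccontr)
    assume n0: "n \<noteq> 0"
    have d5: "\<And>x::nat. 5 dvd x^2 \<Longrightarrow> 5 dvd x"
    proof -
      fix x :: nat assume "5 dvd x^2"
      hence "(x mod 5)^2 mod 5 = 0" by (metis dvd_imp_mod_0 power_mod)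
      moreover have "x mod 5 < 5" by simp
      moreover have "x mod 5 = 0 \<or> x mod 5 = 1 \<or> x mod 5 = 2 \<or> x mod 5 = 3 \<or> x mod 5 = 4" by arith
      ultimately have "x mod 5 = 0" by (auto simp: power2_eq_square)
      thus "5 dvd x" by auto
    qed
    have "5 dvd j^2" using less.prems by simp
    then obtain k where k: "j = 5*k" using d5 by blast
    hence "n^2 = 5*k^2" using less.prems by (simp add: power2_eq_square)
    hence "5 dvd n^2" by simp
    then obtain l where l: "n = 5*l" using d5 by blast
    hence "k^2 = 5*l^2" using \<open>n^2 = 5*k^2\<close> by (simp add: power2_eq_square)
    moreover have "l < n" using l n0 by simp
    ultimately have "l = 0" using less.IH by blast
    thus False using l n0 by simp
  qed
qed

definition psi :: real where "psi = phi - 1"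

lemma sqrt5_bounds: "2 < sqrt 5" "sqrt 5 < 3"
  by (rule real_less_rsqrt, simp) (rule real_less_lsqrt, simp_all)

lemma phi_gt1: "phi > 1" and phi_lt2: "phi < 2" and psi_pos: "psi > 0" and psi_lt1: "psi < 1"
  using sqrt5_bounds by (auto simp: phi_def psi_def)

lemma phi_psi: "phi * psi = 1"
proof -
  have "sqrt 5 * sqrt 5 = 5" by simp
  thus ?thesis by (simp add: phi_def psi_def field_simps)
qed

lemma phi_eq: "phi = 1 + psi" by (simp add: psi_def)

lemma div_phi: "x / phi = x * psi"
  using phi_psi phi_gt1 by (simp add: field_simps)

lemma le_psi_iff: "x \<le> y * psi \<longleftrightarrow> x * phi \<le> y"
proof -
  have "x \<le> y * psi \<longleftrightarrow> x * phi \<le> y * psi * phi" using phi_gt1 by simp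
  also have "y * psi * phi = y" using phi_psi by (simp add: mult.assoc mult.commute)
  finally show ?thesis .
qed

lemma less_psi_iff: "x < y * psi \<longleftrightarrow> x * phi < y"
proof -
  have "x < y * psi \<longleftrightarrow> x * phi < y * psi * phi" using phi_gt1 by simp
  also have "y * psi * phi = y" using phi_psi by (simp add: mult.assoc mult.commute)
  finally show ?thesis .
qed

lemma psi_le_iff: "y * psi \<le> x \<longleftrightarrow> y \<le> x * phi"
  using less_psi_iff[of x y] by linarith

lemma psi_less_iff: "y * psi < x \<longleftrightarrow> y < x * phi"
  using le_psi_iff[of x y] by linarith

lemma phi_irr: assumes "n \<ge> 1" shows "real n * phi \<noteq> of_int k"
proof
  assume h: "real n * phi = of_int k"
  hence "real n * sqrt 5 = of_int (2*k - int n)" by (simp add: phi_def field_simps)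
  hence "(real n * sqrt 5)^2 = (of_int (2*k - int n))^2" by simp
  hence "real (5 * n^2) = of_int ((2*k - int n)^2)" by (simp add: power_mult_distrib)
  hence "int (5 * n^2) = (2*k - int n)^2" by linarith
  hence "int (5 * n^2) = int ((nat \<bar>2*k - int n\<bar>)^2)" by simp
  hence "(nat \<bar>2*k - int n\<bar>)^2 = 5 * n^2" by linarith
  hence "n = 0" by (rule no_sq5)
  thus False using assms by simp
qed

lemma psi_irr: assumes "n \<ge> 1" shows "real n * psi \<noteq> of_int k"
proof
  assume "real n * psi = of_int k"
  hence "real n * phi = of_int (k + int n)" by (simp add: phi_eq algebra_simps)
  thus False using phi_irr[OF assms] by blast
qed

definition dd :: "nat \<Rightarrow> nat" where "dd n = nat \<lfloor>real n * psi\<rfloor>"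
definition aa :: "nat \<Rightarrow> nat" where "aa n = nat \<lfloor>real n * phi\<rfloor>"

lemma dd_real: "real (dd n) = of_int \<lfloor>real n * psi\<rfloor>"
  using psi_pos by (simp add: dd_def)

lemma dd_lower: "real (dd n) \<le> real n * psi"
  by (simp add: dd_real)
lemma dd_upper: "real n * psi < real (dd n) + 1"
  by (simp add: dd_real)
lemma dd_strict: "n \<ge> 1 \<Longrightarrow> real (dd n) < real n * psi"
proof -
  assume "n \<ge> 1"
  have "of_int \<lfloor>real n * psi\<rfloor> \<le> real n * psi" by (rule of_int_floor_le)
  moreover have "real n * psi \<noteq> of_int \<lfloor>real n * psi\<rfloor>" using psi_irr \<open>n \<ge> 1\<close> by blast
  ultimately show ?thesis unfolding dd_real by linarith
qed
lemma dd_ge: "real k \<le> real n * psi \<Longrightarrow> k \<le> dd n"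
proof -
  assume "real k \<le> real n * psi"
  hence "int k \<le> \<lfloor>real n * psi\<rfloor>" by (simp add: le_floor_iff)
  thus ?thesis by (simp add: dd_def)
qed
lemma dd_lt: "real n * psi < real k \<Longrightarrow> dd n < k"
proof -
  assume "real n * psi < real k"
  hence "real (dd n) < real k" using dd_lower[of n] by linarith
  thus ?thesis by simp
qed

lemma aa_eq: "aa n = n + dd n"
proof -
  have "real n * phi = real n * psi + of_int (int n)" by (simp add: phi_eq algebra_simps)
  hence "\<lfloor>real n * phi\<rfloor> = \<lfloor>real n * psi\<rfloor> + int n" by simp
  moreover have "0 \<le> \<lfloor>real n * psi\<rfloor>" using psi_pos by simp
  ultimately show ?thesis by (simp add: aa_def dd_def nat_add_distrib)
qed

lemma floor_int_nat: "real k \<le> x \<Longrightarrow> x < real k + 1 \<Longrightarrow> \<lfloor>x\<rfloor> = int k"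
  by (simp add: floor_eq_iff)

lemma dd_0: "dd 0 = 0" by (simp add: dd_def)
lemma dd_1: "dd 1 = 0" using dd_lt[of 1 1] psi_lt1 by simp
lemma dd_mono: "dd n \<le> dd (Suc n)"
  using dd_lower[of n] psi_pos by (intro dd_ge) (simp add: algebra_simps)
lemma dd_step: "dd (Suc n) \<le> dd n + 1"
proof -
  have "real (Suc n) * psi < real (dd n + 2)"
    using dd_upper[of n] psi_lt1 by (simp add: algebra_simps)
  hence "dd (Suc n) < dd n + 2" by (rule dd_lt)
  thus ?thesis by simp
qed
lemma dd_less_self: "n \<ge> 1 \<Longrightarrow> dd n < n"
  using psi_lt1 by (intro dd_lt) simp

definition J :: "nat \<Rightarrow> bool" where "J N = (\<exists>m::nat. int N - 1 = \<lfloor>real m * phi\<rfloor>)"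

lemma J1: "J 1" unfolding J_def by (rule exI[of _ 0]) simp

lemma W1: assumes "N \<ge> 2" shows "J N \<longleftrightarrow> dd (N - 1) < dd N"
proof -
  obtain n where nN: "N = Suc n" and n1: "n \<ge> 1" using assms by (cases N) auto
  show ?thesis
  proof
    assume "J N"
    then obtain m where m: "int N - 1 = \<lfloor>real m * phi\<rfloor>" unfolding J_def by blast
    hence fl: "\<lfloor>real m * phi\<rfloor> = int n" using nN by simp
    have lo: "real n \<le> real m * phi" using fl by (metis floor_le_iff of_int_of_nat_eq order_refl le_floor_iff)
    have hi: "real m * phi < real n + 1" using fl by (metis floor_less_iff of_int_of_nat_eq add.commute less_add_one floor_eq_iff)
    have "m \<noteq> 0"
    proof
      assume "m = 0"
      hence "int n = 0" using fl by simp
      thus False using n1 by simp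
    qed
    hence "real m * phi \<noteq> of_int (int n)" using phi_irr[of m "int n"] by simp
    hence "real n < real m * phi" using lo by simp
    hence "real n * psi < real m" using psi_less_iff by blast
    hence a: "dd n < m" by (rule dd_lt)
    have "real m < real (Suc n) * psi" using less_psi_iff hi by simp
    hence "m \<le> dd (Suc n)" by (intro dd_ge) simp
    with a show "dd (N - 1) < dd N" using nN by simp
  next
    assume h: "dd (N - 1) < dd N"
    define m where "m = dd N"
    have "real n * psi < real m"
      using dd_upper[of n] h nN unfolding m_def by (simp del: of_nat_add add: of_nat_add[symmetric]) linarith?
    hence lo: "real n < real m * phi" using psi_less_iff by blast
    have "real m \<le> real N * psi" unfolding m_def by (rule dd_lower)
    hence hi0: "real m * phi \<le> real N" using le_psi_iff by blast
    have "m \<ge> 1" using h unfolding m_def by simp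
    hence "real m * phi \<noteq> of_int (int N)" using phi_irr[of m "int N"] by simp
    hence hi: "real m * phi < real n + 1" using hi0 nN by simp
    have "\<lfloor>real m * phi\<rfloor> = int n" using lo hi by (simp add: floor_eq_iff)
    thus "J N" unfolding J_def using nN by (intro exI[of _ m]) simp
  qed
qed

lemma J_ge2: "\<not> J N \<Longrightarrow> N \<ge> 1 \<Longrightarrow> N \<ge> 2"
  using J1 by (cases "N = 1") auto

definition G :: "nat \<Rightarrow> nat" where "G n = (if n = 0 then 0 else if J n then aa n else dd n + 1)"
definition cc :: "nat \<Rightarrow> nat" where "cc n = (if n = 0 then 0 else dd n + 1)"

lemma step_J: assumes "N \<ge> 1" "J N" shows "cc N = cc (N - 1) + 1" "G N = N + cc (N - 1)"
proof -
  have "cc N = cc (N - 1) + 1 \<and> G N = N + cc (N - 1)"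
  proof (cases "N = 1")
    case True thus ?thesis using J1 dd_1 by (simp add: cc_def G_def aa_eq)
  next
    case False
    hence N2: "N \<ge> 2" using assms by simp
    hence "dd (N - 1) < dd N" using W1 assms by blast
    moreover have "dd N \<le> dd (N - 1) + 1" using dd_step[of "N - 1"] N2 by simp
    ultimately have "dd N = dd (N - 1) + 1" by simp
    thus ?thesis using N2 assms by (simp add: cc_def G_def aa_eq)
  qed
  thus "cc N = cc (N - 1) + 1" "G N = N + cc (N - 1)" by auto
qed

lemma step_nJ: assumes "N \<ge> 1" "\<not> J N" shows "cc N = cc (N - 1)" "G N = cc N"
proof -
  have N2: "N \<ge> 2" using J_ge2 assms by blast
  hence "\<not> dd (N - 1) < dd N" using W1 assms by blast
  moreover have "dd (N - 1) \<le> dd N" using dd_mono[of "N - 1"] N2 by simp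
  ultimately have "dd N = dd (N - 1)" by simp
  thus "cc N = cc (N - 1)" "G N = cc N" using N2 assms by (simp_all add: cc_def G_def)
qed

lemma sum_G: "(\<Sum>i<Suc n. G i) = n * cc n"
proof (induction n)
  case 0 thus ?case by (simp add: G_def)
next
  case (Suc n)
  have "(\<Sum>i<Suc (Suc n). G i) = n * cc n + G (Suc n)" using Suc by simp
  also have "\<dots> = Suc n * cc (Suc n)"
  proof (cases "J (Suc n)")
    case True thus ?thesis using step_J[of "Suc n"] by simp
  next
    case False thus ?thesis using step_nJ[of "Suc n"] by simp
  qed
  finally show ?case .
qed

lemma cc_le: "cc n \<le> n"
  using dd_less_self[of n] by (cases "n = 0") (auto simp: cc_def)

lemma GG: "G (G m) = m"
proof -
  consider "m = 0" | "m = 1" | "m \<ge> 2" by linarith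
  thus ?thesis
  proof cases
    case 1 thus ?thesis by (simp add: G_def)
  next
    case 2 thus ?thesis using J1 dd_1 by (simp add: G_def aa_eq)
  next
    case 3
    then obtain q where mq: "m = Suc q" and q1: "q \<ge> 1" by (cases m) auto
    show ?thesis
    proof (cases "J m")
      case True
      define k where "k = dd m"
      have "dd q < k" using W1[OF 3] True mq unfolding k_def by simp
      hence kq: "real q * psi < real k" using dd_upper[of q] by linarith
      have km: "real k < real m * psi" unfolding k_def using dd_strict 3 by simp
      have Gm: "G m = m + k" using True 3 by (simp add: G_def aa_eq k_def)
      have e1: "real m * phi = real m + real m * psi" by (simp add: phi_eq algebra_simps)
      have e2: "real q * phi = real q + real q * psi" by (simp add: phi_eq algebra_simps)
      have "real q \<le> real (m + k) * psi" using le_psi_iff[of "real q" "real (m+k)"] e2 kq mq by simp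
      hence d1: "q \<le> dd (m + k)" by (rule dd_ge)
      have "real (m + k) * psi < real m" using psi_less_iff[of "real (m+k)" "real m"] e1 km by simp
      hence d2: "dd (m + k) < m" by (rule dd_lt)
      have ddp: "dd (m + k) = q" using d1 d2 mq by simp
      have "real q \<le> real (m + k - 1) * psi" using le_psi_iff[of "real q" "real (m+k-1)"] e2 kq mq by simp
      hence "q \<le> dd (m + k - 1)" by (rule dd_ge)
      hence "\<not> J (m + k)" using W1[of "m + k"] 3 ddp by simp
      thus ?thesis using Gm ddp mq by (simp add: G_def)
    next
      case False
      define k where "k = dd m"
      have "\<not> dd q < k" using W1[OF 3] False mq unfolding k_def by simp
      moreover have "dd q \<le> k" using dd_mono[of q] mq k_def by simp
      ultimately have kq: "dd q = k" by simp
      have h1: "real k \<le> real q * psi" using dd_lower[of q] kq by simp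
      have h2: "real m * psi < real k + 1" unfolding k_def by (rule dd_upper)
      have Gm: "G m = k + 1" using False 3 by (simp add: G_def k_def)
      have kle: "k \<le> q" using h1 psi_lt1 psi_pos
        by (smt (verit) mult_left_le of_nat_le_iff of_nat_0_le_iff)
      have a1: "real k * phi \<le> real q" using le_psi_iff h1 by blast
      have a2: "real m < (real k + 1) * phi" using psi_less_iff h2 by blast
      have e1: "real k * phi = real k + real k * psi" by (simp add: phi_eq algebra_simps)
      have e2: "real (q - k) * phi = real q - real k + real q * psi - real k * psi"
        using kle by (simp add: phi_eq algebra_simps of_nat_diff)
      have e3: "(real k + 1) * phi = real k + real k * psi + 1 + psi" by (simp add: phi_eq algebra_simps)
      have e4: "real m * psi = real q * psi + psi" using mq by (simp add: algebra_simps)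
      have e5: "real m = real q + 1" using mq by simp
      have "real k \<le> real (q - k) * phi" using e1 e2 a1 h1 by linarith
      moreover have "real (q - k) * phi < real k + 1" using e2 e3 e4 e5 a2 h2 by linarith
      ultimately have "\<lfloor>real (q - k) * phi\<rfloor> = int k" by (rule floor_int_nat)
      hence Jv: "J (k + 1)" unfolding J_def by (intro exI[of _ "q - k"]) simp
      have "real m \<le> real (k + 1) * phi" using a2 by (simp add: add.commute)
      moreover have "real (k + 1) * phi < real m + 1" unfolding of_nat_add of_nat_1 using e1 e3 e5 a1 psi_lt1 by linarith
      ultimately have "\<lfloor>real (k + 1) * phi\<rfloor> = int m" by (rule floor_int_nat)
      hence "aa (k + 1) = m" by (simp add: aa_def)
      thus ?thesis using Gm Jv by (simp add: G_def)
    qed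
  qed
qed

lemma G_inj: "G a = G b \<Longrightarrow> a = b"
  by (metis GG)

lemma G_dd_small: assumes "N \<ge> 1" shows "G (dd N) < N"
proof -
  define v where "v = dd N"
  have vN: "v < N" using dd_less_self assms v_def by simp
  show ?thesis
  proof (cases "v = 0")
    case True thus ?thesis using assms v_def by (simp add: G_def)
  next
    case False
    show ?thesis
    proof (cases "J v")
      case True
      have "real v \<le> real N * psi" unfolding v_def by (rule dd_lower)
      hence "real v * phi \<le> real N" using le_psi_iff by blast
      moreover have "real v * phi \<noteq> of_int (int N)" using phi_irr[of v "int N"] False by simp
      ultimately have "real v * phi < real N" by simp
      moreover have "real v * phi = real v + real v * psi" by (simp add: phi_eq algebra_simps)
      moreover have "real (dd v) \<le> real v * psi" by (rule dd_lower)
      ultimately have "real (v + dd v) < real N" by simp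
      thus ?thesis using True False v_def by (simp add: G_def aa_eq)
    next
      case False2: False
      have "dd v < v" using dd_less_self False by simp
      thus ?thesis using False False2 vN v_def by (simp add: G_def)
    qed
  qed
qed

lemma greedy_G: "greedy_seq n = map G [0..<Suc n]"
proof (induction n)
  case 0 thus ?case by (simp add: G_def)
next
  case (Suc n)
  define N where "N = Suc n"
  have setp: "set (greedy_seq n) = G ` {0..<N}" using Suc N_def by (simp del: upt_Suc)
  have "sum_list (greedy_seq n) = (\<Sum>i<N. G i)"
    using Suc N_def by (simp add: atLeast0LessThan sum_set_upt_conv_sum_list_nat[symmetric])
  hence sump: "sum_list (greedy_seq n) = n * cc n" using sum_G N_def by simp
  have tot: "n * cc n + G N = N * cc N" using sum_G[of N] sum_G[of n] N_def by simp
  have "(LEAST k. k \<notin> set (greedy_seq n) \<and> Suc n dvd (sum_list (greedy_seq n) + k)) = G N"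
  proof (rule Least_equality)
    have "G N \<notin> G ` {0..<N}" using G_inj by force
    moreover have "sum_list (greedy_seq n) + G N = N * cc N" using sump tot by simp
    ultimately show "G N \<notin> set (greedy_seq n) \<and> Suc n dvd sum_list (greedy_seq n) + G N"
      using setp N_def by (metis dvd_triv_left)
  next
    fix y assume y: "y \<notin> set (greedy_seq n) \<and> Suc n dvd sum_list (greedy_seq n) + y"
    show "G N \<le> y"
    proof (rule ccontr)
      assume "\<not> G N \<le> y"
      hence yl: "y < G N" by simp
      have d1: "N dvd n * cc n + G N" by (metis tot dvd_triv_left)
      have d2: "N dvd n * cc n + y" using y sump N_def by simp
      have "N dvd (n * cc n + G N) - (n * cc n + y)" using dvd_diff_nat[OF d1 d2] .
      hence "N dvd G N - y" by simp
      then obtain t where t: "G N - y = N * t" by blast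
      have "t \<ge> 1" using t yl by (cases t) auto
      show False
      proof (cases "J N")
        case True
        have "G N = N + cc n" "cc N = cc n + 1" using step_J[of N] True N_def by auto
        hence GN: "G N = N + dd N" using N_def by (simp add: cc_def)
        have "dd N < N" using dd_less_self N_def by simp
        hence "t < 2" using t GN \<open>t \<ge> 1\<close> by (cases t) (auto, rename_tac u, case_tac u, auto)
        hence "y = dd N" using t GN yl \<open>t \<ge> 1\<close> by (cases t) auto
        moreover have "dd N = G (G (dd N))" by (simp add: GG)
        moreover have "G (dd N) < N" using G_dd_small N_def by simp
        ultimately have "y \<in> G ` {0..<N}" by auto
        thus False using y setp by simp
      next
        case False
        have "G N \<le> N" using step_nJ[of N] False N_def cc_le[of N] by simp
        hence "y = 0" using t \<open>t \<ge> 1\<close> yl by (cases t) auto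
        moreover have "0 = G 0" by (simp add: G_def)
        ultimately have "y \<in> G ` {0..<N}" using N_def by auto
        thus False using y setp by simp
      qed
    qed
  qed
  thus ?case using Suc N_def by (simp add: Let_def)
qed

lemma f_G: "f n = G n"
  unfolding f_def greedy_G by (simp del: upt_Suc add: nth_map_upt)

theorem theorem4:
  fixes n :: nat
  assumes "n \<ge> 1"
  shows "f n = (if \<exists>m::nat. int n - 1 = \<lfloor>real m * phi\<rfloor>
                then nat \<lfloor>real n * phi\<rfloor>
                else nat \<lfloor>real n / phi\<rfloor> + 1)"
  using assms by (simp add: f_G G_def J_def[symmetric] aa_def dd_def div_phi)

end
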